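(* Let $f:\mathbb{R}^n\times\mathbb{R}^p\to[-\infty,\infty]$ be a proper nearly convex function and $F:\mathbb{R}^n\rightrightarrows\mathbb{R}^p$ a nearly convex set-valued mapping with $\operatorname{ri}(\operatorname{dom} f)\cap\operatorname{ri}(\operatorname{gph} F)\neq\emptyset$. Let $\mu(x)=\inf\{f(x,y):y\in F(x)\}$ and $S(x)=\{y\in F(x): f(x,y)=\mu(x)\}$. Take $\bar x\in\mathbb{R}^n$ with $\mu(\bar x)\in\mathbb{R}$ and $S(\bar x)\neq\emptyset$. Then for every $\bar y\in S(\bar x)$, $$\partial\mu(\bar x)=\bigcup_{(u,v)\in\partial f(\bar x,\bar y)}\big[u+D^*F(\bar x,\bar y)(v)\big].$$
   Context: A set $\Omega\subset\mathbb{R}^k$ is nearly convex if there is a convex set $C$ with $C\subset\Omega\subset\overline{C}$; $\operatorname{ri}\Omega=\{a\in\Omega:\exists\delta>0,\ B(a;\delta)\cap\operatorname{aff}\Omega\subset\Omega\}$. A function is nearly convex if its epigraph $\{(x,\lambda):f(x)\le\lambda\}$ is nearly convex; proper if its domain $\{f<\infty\}$ is nonempty and $f>-\infty$; a set-valued mapping is nearly convex if its graph $\operatorname{gph}F=\{(x,y):y\in F(x)\}$ is. Normal cone: $N(\bar z;\Omega)=\{v:\langle v,z-\bar z\rangle\le0\ \forall z\in\Omega\}$ for $\bar z\in\Omega$. Coderivative: $D^*F(\bar x,\bar y)(v)=\{u\in\mathbb{R}^n:(u,-v)\in N((\bar x,\bar y);\operatorname{gph}F)\}$. Subdifferential of $\varphi$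 at $\bar z$ with $\varphi(\bar z)\in\mathbb{R}$: $\partial\varphi(\bar z)=\{w:\langle w,z-\bar z\rangle\le\varphi(z)-\varphi(\bar z)\ \forall z\}$. *)

theory Defs
  imports "HOL-Analysis.Analysis" "HOL-Library.Extended_Real"
begin

definition nearly_convex_set :: "'a::real_normed_vector set \<Rightarrow> bool" where
  "nearly_convex_set \<Omega> \<longleftrightarrow> (\<exists>C. convex C \<and> C \<subseteq> \<Omega> \<and> \<Omega> \<subseteq> closure C)"

definition epigraph :: "('a \<Rightarrow> ereal) \<Rightarrow> ('a \<times> real) set" where
  "epigraph f = {(x, t). f x \<le> ereal t}"

definition nearly_convex_fun :: "('a::real_normed_vector \<Rightarrow> ereal) \<Rightarrow> bool" where
  "nearly_convex_fun f \<longleftrightarrow> nearly_convex_set (epigraph f)"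

definition edom :: "('a \<Rightarrow> ereal) \<Rightarrow> 'a set" where
  "edom f = {x. f x < \<infinity>}"

definition proper_fun :: "('a \<Rightarrow> ereal) \<Rightarrow> bool" where
  "proper_fun f \<longleftrightarrow> edom f \<noteq> {} \<and> (\<forall>x. f x > -\<infinity>)"

definition gph :: "('a \<Rightarrow> 'b set) \<Rightarrow> ('a \<times> 'b) set" where
  "gph F = {(x, y). y \<in> F x}"

definition nearly_convex_map :: "('a::real_normed_vector \<Rightarrow> 'b::real_normed_vector set) \<Rightarrow> bool" where
  "nearly_convex_map F \<longleftrightarrow> nearly_convex_set (gph F)"

text \<open>Normal cone, used only at points of the set.\<close>
definition normal_cone :: "'a::real_inner \<Rightarrow> 'a set \<Rightarrow> 'a set" where
  "normal_cone zb \<Omega> = {v. \<forall>z\<in>\<Omega>. inner v (z - zb) \<le> 0}"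

definition coderiv ::
  "('a::real_inner \<Rightarrow> 'b::real_inner set) \<Rightarrow> 'a \<Rightarrow> 'b \<Rightarrow> 'b \<Rightarrow> 'a set" where
  "coderiv F xb yb v = {u. (u, -v) \<in> normal_cone (xb, yb) (gph F)}"

text \<open>Subdifferential, used only at points where the function is finite.\<close>
definition subdiff :: "('a::real_inner \<Rightarrow> ereal) \<Rightarrow> 'a \<Rightarrow> 'a set" where
  "subdiff \<phi> zb = {w. \<forall>z. ereal (inner w (z - zb)) \<le> \<phi> z - \<phi> zb}"

definition optval :: "('a \<times> 'b \<Rightarrow> ereal) \<Rightarrow> ('a \<Rightarrow> 'b set) \<Rightarrow> 'a \<Rightarrow> ereal" where
  "optval f F x = Inf {f (x, y) | y. y \<in> F x}"

definition solmap :: "('a \<times> 'b \<Rightarrow> ereal) \<Rightarrow> ('a \<Rightarrow> 'b set) \<Rightarrow> 'a \<Rightarrow> 'b set" where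
  "solmap f F x = {y \<in> F x. f (x, y) = optval f F x}"

end

theory Submission
  imports Defs
begin

lemma ri_const:
  fixes D :: "'n::euclidean_space set"
  assumes z0: "z0 \<in> rel_interior D" and le: "\<And>z. z \<in> D \<Longrightarrow> inner v z0 \<le> inner v z"
    and z: "z \<in> D"
  shows "inner v z = inner v z0"
proof (cases "z = z0")
  case True then show ?thesis by simp
next
  case False
  obtain e where e: "e > 0" "cball z0 e \<inter> affine hull D \<subseteq> D" "z0 \<in> D"
    using z0 mem_rel_interior_cball by blast
  define t where "t = e / norm (z - z0)"
  have nz: "norm (z - z0) > 0" using False by simp
  have t: "t > 0" using e nz by (simp add: t_def)
  define p where "p = (1 + t) *\<^sub>R z0 + (- t) *\<^sub>R z"
  have "p \<in> affine hull D"
    unfolding p_def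
    by (rule mem_affine[OF affine_affine_hull]) (auto intro: hull_inc e z)
  moreover have "dist z0 p = e"
  proof -
    have "z0 - p = t *\<^sub>R (z - z0)" by (simp add: p_def algebra_simps)
    then have "dist z0 p = t * norm (z - z0)" using t by (simp add: dist_norm abs_of_pos)
    then show ?thesis using nz by (simp add: t_def)
  qed
  ultimately have "p \<in> D" using e by auto
  then have "inner v z0 \<le> inner v p" by (rule le)
  also have "inner v p = inner v z0 - t * inner v (z - z0)"
    by (simp add: p_def algebra_simps inner_add_right inner_diff_right)
  finally have "t * inner v (z - z0) \<le> 0" by simp
  then have "inner v (z - z0) \<le> 0" using t by (simp add: mult_le_0_iff)
  moreover have "inner v z0 \<le> inner v z" using le z .
  ultimately show ?thesis by (simp add: inner_diff_right)
qed

lemma nearly_convex_affine_image: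
  fixes E :: "'n::euclidean_space set"
  assumes "nearly_convex_set E" "linear L"
  shows "nearly_convex_set ((\<lambda>x. L x + b) ` E)"
proof -
  obtain C where C: "convex C" "C \<subseteq> E" "E \<subseteq> closure C"
    using assms(1) unfolding nearly_convex_set_def by blast
  let ?T = "\<lambda>x. L x + b"
  have cT: "continuous_on UNIV ?T"
    using assms(2) by (intro continuous_intros linear_continuous_on) (simp add: linear_conv_bounded_linear)
  have "convex (?T ` C)"
  proof -
    have "?T ` C = (+) b ` (L ` C)" by (auto simp: image_image add.commute)
    then show ?thesis using convex_linear_image[OF assms(2) C(1)] convex_translation by metis
  qed
  moreover have "?T ` C \<subseteq> ?T ` E" using C by auto
  moreover have "?T ` E \<subseteq> closure (?T ` C)"
  proof -
    have "?T ` E \<subseteq> ?T ` closure C" using C by auto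
    also have "\<dots> \<subseteq> closure (?T ` C)"
      by (rule image_closure_subset[OF continuous_on_subset[OF cT]]) (auto intro: closure_subset[THEN subsetD])
    finally show ?thesis .
  qed
  ultimately show ?thesis unfolding nearly_convex_set_def by blast
qed


lemma ereal_sub_le_iff:
  fixes a :: ereal
  shows "ereal r \<le> a - ereal c \<longleftrightarrow> ereal (r + c) \<le> a"
  by (cases a) auto

lemma sum_rule:
  fixes f :: "'n::euclidean_space \<Rightarrow> ereal" and \<Omega> :: "'n set"
  assumes pf: "proper_fun f" and ncf: "nearly_convex_fun f" and ncO: "nearly_convex_set \<Omega>"
    and qc: "rel_interior (edom f) \<inter> rel_interior \<Omega> \<noteq> {}"
    and zb: "zb \<in> \<Omega>" and fzb: "f zb = ereal c"
    and hw: "\<And>z. z \<in> \<Omega> \<Longrightarrow> ereal (inner w (z - zb) + c) \<le> f z"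
  shows "\<exists>w1 w2. w = w1 + w2 \<and> w1 \<in> subdiff f zb \<and> w2 \<in> normal_cone zb \<Omega>"
proof -
  define L where "L = (\<lambda>p::'n \<times> real. (fst p, snd p - inner w (fst p)))"
  define b where "b = ((0::'n), inner w zb - c)"
  have linL: "linear L" unfolding L_def linear_iff
    by (auto simp: inner_add_right algebra_simps)
  define \<Theta> where "\<Theta> = (\<lambda>x. L x + b) ` epigraph f"
  have \<Theta>_eq: "(z,l) \<in> \<Theta> \<longleftrightarrow> f z \<le> ereal (l + c + inner w (z - zb))" for z l
  proof
    assume "(z,l) \<in> \<Theta>"
    then obtain z' t where "f z' \<le> ereal t" "(z,l) = L (z',t) + b"
      unfolding \<Theta>_def epigraph_def by auto
    then show "f z \<le> ereal (l + c + inner w (z - zb))"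
      by (simp add: L_def b_def inner_diff_right)
  next
    assume h: "f z \<le> ereal (l + c + inner w (z - zb))"
    have "(z,l) = L (z, l + c + inner w (z - zb)) + b"
      by (simp add: L_def b_def inner_diff_right)
    moreover have "(z, l + c + inner w (z - zb)) \<in> epigraph f"
      using h by (simp add: epigraph_def)
    ultimately show "(z,l) \<in> \<Theta>" unfolding \<Theta>_def by blast
  qed
  have ncT: "nearly_convex_set \<Theta>"
    unfolding \<Theta>_def using nearly_convex_affine_image ncf[unfolded nearly_convex_fun_def] linL by blast
  obtain C1 where C1: "convex C1" "C1 \<subseteq> \<Theta>" "\<Theta> \<subseteq> closure C1"
    using ncT unfolding nearly_convex_set_def by blast
  obtain C2 where C2: "convex C2" "C2 \<subseteq> \<Omega>" "\<Omega> \<subseteq> closure C2"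
    using ncO unfolding nearly_convex_set_def by blast
  have zbT: "(zb, 0) \<in> \<Theta>" using \<Theta>_eq fzb by simp
  have C1ne: "C1 \<noteq> {}" using C1 zbT by auto
  have C2ne: "C2 \<noteq> {}" using C2 zb by auto
  define N where "N = C2 \<times> {t::real. t < 0}"
  have cN: "convex N" unfolding N_def
    by (intro convex_Times C2(1)) (auto simp: convex_def, smt (verit) mult_nonneg_nonpos mult_pos_neg)
  define A where "A = {p - q | p q. p \<in> C1 \<and> q \<in> N}"
  have cA: "convex A" proof -
    have "A = (\<Union>x\<in> C1. \<Union>y \<in> N. {x - y})" unfolding A_def by blast
    then show ?thesis using convex_differences[OF C1(1) cN] by simp
  qed
  have Ane: "A \<noteq> {}"
  proof -
    obtain p where "p \<in> C1" using C1ne by blast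
    obtain z where "z \<in> C2" using C2ne by blast
    then have "(z, -1) \<in> N" by (simp add: N_def)
    then show ?thesis unfolding A_def using \<open>p \<in> C1\<close> by blast
  qed
  have A0: "0 \<notin> A"
  proof
    assume "0 \<in> A"
    then obtain p q where pq0: "p \<in> C1" "q \<in> N" "0 = p - q" unfolding A_def by blast
    then have pq: "p \<in> C1" "q \<in> N" "p = q" by auto
    obtain z l where q: "q = (z,l)" by (cases q)
    have "z \<in> \<Omega>" "l < 0" using pq q C2 by (auto simp: N_def)
    have "f z \<le> ereal (l + c + inner w (z - zb))" using pq q C1 \<Theta>_eq by auto
    also have "\<dots> < ereal (inner w (z - zb) + c)" using \<open>l < 0\<close> by simp
    also have "\<dots> \<le> f z" using hw \<open>z \<in> \<Omega>\<close> by blast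
    finally show False by simp
  qed
  obtain a where a: "a \<in> span A" "a \<noteq> 0" "\<And>x. x \<in> A \<Longrightarrow> 0 \<le> a \<bullet> x"
    using separating_hyperplane_set_0_inspan[OF cA Ane A0] by blast
  have sep1: "a \<bullet> q \<le> a \<bullet> p" if "p \<in> C1" "q \<in> N" for p q
  proof -
    have "p - q \<in> A" using that unfolding A_def by blast
    then have "0 \<le> a \<bullet> (p - q)" using a(3) by blast
    then show ?thesis by (simp add: inner_diff_right)
  qed
  have sep2: "a \<bullet> q \<le> a \<bullet> p" if "p \<in> \<Theta>" "q \<in> N" for p q
  proof -
    have "closure C1 \<subseteq> {p. a \<bullet> p \<ge> a \<bullet> q}"
      by (rule closure_minimal) (use sep1 that(2) in blast, rule closed_halfspace_ge)
    then show ?thesis using that C1 by auto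
  qed
  have sep3: "a \<bullet> q \<le> a \<bullet> p" if "p \<in> \<Theta>" "q \<in> \<Omega> \<times> {t. t \<le> 0}" for p q
  proof -
    have "closure N \<subseteq> {q. a \<bullet> q \<le> a \<bullet> p}"
      by (rule closure_minimal) (use sep2 that(1) in blast, rule closed_halfspace_le)
    moreover have "closure N = closure C2 \<times> {..0}"
    proof -
      have "{t::real. t < 0} = {..<0}" by auto
      then show ?thesis unfolding N_def closure_Times by simp
    qed
    moreover have "q \<in> closure C2 \<times> {..0}" using that C2 by (auto simp: mem_Times_iff)
    ultimately show ?thesis by blast
  qed
  obtain v \<gamma> where av: "a = (v, \<gamma>)" by (cases a)
  have fin: "\<exists>r. f z = ereal r" if "z \<in> edom f" for z
  proof -
    have "f z < \<infinity>" "f z > -\<infinity>" using that pf unfolding edom_def proper_fun_def by auto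
    then show ?thesis by (cases "f z") auto
  qed
  have \<Theta>pt: "(z, r - c - inner w (z - zb)) \<in> \<Theta>" if "f z = ereal r" for z r
    using that \<Theta>_eq by simp
  have g0: "\<gamma> \<ge> 0"
  proof -
    have "a \<bullet> (zb, 0) \<le> a \<bullet> (zb, 1)"
      using sep3[of "(zb,1)" "(zb,0)"] \<Theta>_eq fzb zb by simp
    then show ?thesis by (simp add: av)
  qed
  have gne: "\<gamma> \<noteq> 0"
  proof
    assume g: "\<gamma> = 0"
    have H: "v \<bullet> z2 \<le> v \<bullet> z1" if hz: "z1 \<in> edom f" "z2 \<in> \<Omega>" for z1 z2
    proof -
      obtain r where "f z1 = ereal r" using fin hz(1) by blast
      then have "(z1, r - c - inner w (z1 - zb)) \<in> \<Theta>" by (rule \<Theta>pt)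
      from sep3[OF this, of "(z2, 0)"] hz show ?thesis by (simp add: av g)
    qed
    obtain z0 where z0: "z0 \<in> rel_interior (edom f)" "z0 \<in> rel_interior \<Omega>" using qc by blast
    have z0': "z0 \<in> edom f" "z0 \<in> \<Omega>" using z0 rel_interior_subset by blast+
    have c1: "v \<bullet> z = v \<bullet> z0" if "z \<in> edom f" for z
      by (rule ri_const[OF z0(1) _ that]) (use H z0' in blast)
    have c2: "v \<bullet> z = v \<bullet> z0" if "z \<in> \<Omega>" for z
    proof -
      have "(-v) \<bullet> z = (-v) \<bullet> z0"
        by (rule ri_const[OF z0(2) _ that]) (use H z0' in auto)
      then show ?thesis by simp
    qed
    have A_orth: "A \<subseteq> {x. a \<bullet> x = 0}"
    proof
      fix x assume "x \<in> A"
      then obtain p q where pq: "x = p - q" "p \<in> C1" "q \<in> N" unfolding A_def by auto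
      obtain z1 l1 where p: "p = (z1,l1)" by (cases p)
      obtain z2 l2 where q: "q = (z2,l2)" by (cases q)
      have "f z1 \<le> ereal (l1 + c + inner w (z1 - zb))" using pq p C1 \<Theta>_eq by auto
      then have "f z1 < \<infinity>" by (rule le_less_trans) simp
      then have "z1 \<in> edom f" unfolding edom_def by simp
      moreover have "z2 \<in> \<Omega>" using pq q C2 N_def by auto
      ultimately show "x \<in> {x. a \<bullet> x = 0}"
        using c1 c2 by (simp add: pq p q av g inner_diff_right)
    qed
    have "subspace {x. a \<bullet> x = 0}"
      by (auto simp: subspace_def inner_add_right)
    then have "span A \<subseteq> {x. a \<bullet> x = 0}" using A_orth span_minimal by blast
    then have "a \<bullet> a = 0" using a(1) by auto
    then show False using a(2) by simp
  qed
  then have gp: "\<gamma> > 0" using g0 by simp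
  define v' where "v' = - (1/\<gamma>) *\<^sub>R v"
  have w1: "w + v' \<in> subdiff f zb"
    unfolding subdiff_def
  proof (intro CollectI allI)
    fix z
    show "ereal (inner (w + v') (z - zb)) \<le> f z - f zb"
    proof (cases "f z = \<infinity>")
      case True then show ?thesis by (simp add: fzb)
    next
      case False
      then have "z \<in> edom f" unfolding edom_def by (simp add: less_top)
      then obtain r where r: "f z = ereal r" using fin by blast
      have "a \<bullet> (zb, 0) \<le> a \<bullet> (z, r - c - inner w (z - zb))"
        using sep3[OF \<Theta>pt[OF r], of "(zb,0)"] zb by simp
      then have "v \<bullet> zb \<le> v \<bullet> z + \<gamma> * (r - c - inner w (z - zb))" by (simp add: av)
      then have "(v \<bullet> zb - v \<bullet> z) / \<gamma> \<le> r - c - inner w (z - zb)"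
        using gp by (simp add: divide_le_eq mult.commute)
      moreover have "inner v' (z - zb) = (v \<bullet> zb - v \<bullet> z) / \<gamma>"
        using gp by (simp add: v'_def inner_diff_right diff_divide_distrib)
      ultimately have "inner (w + v') (z - zb) + c \<le> r"
        by (simp add: inner_add_left)
      then show ?thesis using r fzb by (simp add: ereal_sub_le_iff)
    qed
  qed
  have w2: "- v' \<in> normal_cone zb \<Omega>"
    unfolding normal_cone_def
  proof (intro CollectI ballI)
    fix z assume "z \<in> \<Omega>"
    have "a \<bullet> (z, 0) \<le> a \<bullet> (zb, 0)"
      using sep3[OF zbT, of "(z,0)"] \<open>z \<in> \<Omega>\<close> by simp
    then have "v \<bullet> z \<le> v \<bullet> zb" by (simp add: av)
    then have "(v \<bullet> z - v \<bullet> zb) / \<gamma> \<le> 0" using gp by (simp add: divide_le_0_iff)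
    then show "inner (- v') (z - zb) \<le> 0"
      by (simp add: v'_def inner_diff_right diff_divide_distrib)
  qed
  show ?thesis using w1 w2 by (intro exI[of _ "w + v'"] exI[of _ "- v'"]) simp
qed


theorem theorem5p3:
  fixes f :: "'a::euclidean_space \<times> 'b::euclidean_space \<Rightarrow> ereal"
    and F :: "'a \<Rightarrow> 'b set"
    and xb :: 'a and yb :: 'b
  assumes "proper_fun f" and "nearly_convex_fun f"
    and "nearly_convex_map F"
    and "rel_interior (edom f) \<inter> rel_interior (gph F) \<noteq> {}"
    and "optval f F xb \<noteq> \<infinity>" and "optval f F xb \<noteq> -\<infinity>"
    and "solmap f F xb \<noteq> {}"
    and "yb \<in> solmap f F xb"
  shows "subdiff (optval f F) xb =
           (\<Union>(u, v)\<in>subdiff f (xb, yb). (\<lambda>w. u + w) ` coderiv F xb yb v)"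
proof -
  let ?\<mu> = "optval f F"
  obtain c where c: "?\<mu> xb = ereal c" using assms(5,6) by (cases "?\<mu> xb") auto
  have ybF: "yb \<in> F xb" and fyb: "f (xb,yb) = ereal c"
    using assms(8) c unfolding solmap_def by auto
  have gb: "(xb,yb) \<in> gph F" using ybF by (simp add: gph_def)
  have mule: "?\<mu> x \<le> f (x,y)" if "y \<in> F x" for x y
    unfolding optval_def by (rule Inf_lower) (use that in blast)
  show ?thesis
  proof (rule set_eqI iffI)+
    fix u assume u: "u \<in> subdiff ?\<mu> xb"
    have hw: "ereal (inner (u, 0::'b) (z - (xb,yb)) + c) \<le> f z" if "z \<in> gph F" for z
    proof -
      obtain x y where z: "z = (x,y)" by (cases z)
      have yF: "y \<in> F x" using that z by (simp add: gph_def)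
      have "ereal (inner u (x - xb)) \<le> ?\<mu> x - ?\<mu> xb" using u unfolding subdiff_def by blast
      then have "ereal (inner u (x - xb) + c) \<le> ?\<mu> x" using c by (simp add: ereal_sub_le_iff)
      also have "\<dots> \<le> f (x,y)" using mule yF .
      finally show ?thesis by (simp add: z)
    qed
    obtain w1 w2 where w: "(u, 0::'b) = w1 + w2" "w1 \<in> subdiff f (xb,yb)" "w2 \<in> normal_cone (xb,yb) (gph F)"
      using sum_rule[OF assms(1,2) assms(3)[unfolded nearly_convex_map_def] assms(4) gb fyb hw] by blast
    obtain u1 v where w1: "w1 = (u1, v)" by (cases w1)
    obtain u2 v2 where w2: "w2 = (u2, v2)" by (cases w2)
    have uu: "u = u1 + u2" "v2 = - v" using w(1) w1 w2 by (auto simp: eq_neg_iff_add_eq_0 add.commute)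
    have "u2 \<in> coderiv F xb yb v" using w(3) w2 uu by (simp add: coderiv_def)
    then have "u \<in> (\<lambda>w. u1 + w) ` coderiv F xb yb v" using uu by blast
    then show "u \<in> (\<Union>(u, v)\<in>subdiff f (xb, yb). (\<lambda>w. u + w) ` coderiv F xb yb v)"
      using w(2) w1 by blast
  next
    fix u assume "u \<in> (\<Union>(u, v)\<in>subdiff f (xb, yb). (\<lambda>w. u + w) ` coderiv F xb yb v)"
    then obtain u1 v u2 where h: "(u1, v) \<in> subdiff f (xb,yb)" "u2 \<in> coderiv F xb yb v" "u = u1 + u2"
      by blast
    show "u \<in> subdiff ?\<mu> xb"
      unfolding subdiff_def
    proof (intro CollectI allI)
      fix x
      have "ereal (inner u (x - xb) + c) \<le> ?\<mu> x"
        unfolding optval_def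
      proof (rule Inf_greatest)
        fix t assume "t \<in> {f (x, y) |y. y \<in> F x}"
        then obtain y where y: "y \<in> F x" "t = f (x,y)" by blast
        have "ereal (inner (u1, v) ((x,y) - (xb,yb))) \<le> f (x,y) - f (xb,yb)"
          using h(1) unfolding subdiff_def by blast
        then have 1: "ereal (inner u1 (x - xb) + inner v (y - yb) + c) \<le> f (x,y)"
          using fyb by (simp add: ereal_sub_le_iff)
        have "(u2, -v) \<in> normal_cone (xb,yb) (gph F)" using h(2) by (simp add: coderiv_def)
        then have "inner (u2, -v) ((x,y) - (xb,yb)) \<le> 0" using y(1)
          unfolding normal_cone_def gph_def by blast
        then have 2: "inner u2 (x - xb) \<le> inner v (y - yb)" by simp
        have "ereal (inner u (x - xb) + c) \<le> ereal (inner u1 (x - xb) + inner v (y - yb) + c)"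
          using 2 h(3) by (simp add: inner_add_left)
        also have "\<dots> \<le> t" using 1 y(2) by simp
        finally show "ereal (inner u (x - xb) + c) \<le> t" .
      qed
      then show "ereal (inner u (x - xb)) \<le> ?\<mu> x - ?\<mu> xb" using c by (simp add: ereal_sub_le_iff)
    qed
  qed
qed

end
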